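(* Let $\mathcal{M}$ be the set of compactly supported probability distributions on $\mathbb{R}$ and let $\mathcal{D}^R=\{T_d: d \text{ a right-continuous distortion function}\}$. Let $T:\mathcal{M}\to\mathcal{M}$ be monotone. Then $\mathcal{D}^R\circ T=T\circ\mathcal{D}^R$ if and only if $T=T_d\circ T^u$ for some increasing left-continuous function $u:\mathbb{R}\to\mathbb{R}$ and some strictly increasing continuous distortion function $d$.
   Context: Increasing means non-decreasing. A distortion function is an increasing function $d:[0,1]\to[0,1]$ with $d(0)=0$, $d(1)=1$. $T_d(F)(x)=\lim_{y\downarrow x}d(F(y))$. For an increasing function $u:\mathbb{R}\to\mathbb{R}$, $T^u(F)=F\circ u^{-1}$ is the distribution of $u(X)$ when $X\sim F$. For a set $\mathcal{T}$ of maps $\mathcal{M}\to\mathcal{M}$, $\mathcal{T}\circ T=\{T'\circ T:T'\in\mathcal{T}\}$ and $T\circ\mathcal{T}=\{T\circ T':T'\in\mathcal{T}\}$. For $F,G\in\mathcal{M}$, $F\le_{\rm st}G$ means $F(x)\ge G(x)$ for all $x$; $T$ is monotone if $F\le_{\rm st}G$ implies $T(F)\le_{\rm st}T(G)$. *)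

theory Defs
  imports "HOL-Analysis.Analysis"
begin

text \<open>Distributions are represented by their distribution functions (CDFs).
  The class M: compactly supported probability distributions on the reals.\<close>
definition cdfM :: "(real \<Rightarrow> real) set" where
  "cdfM = {F. mono F \<and> (\<forall>x. continuous (at_right x) F) \<and>
              (\<exists>a b. (\<forall>x<a. F x = 0) \<and> (\<forall>x\<ge>b. F x = 1))}"

text \<open>Distortion function: increasing on [0,1], d 0 = 0, d 1 = 1
  (only the values on [0,1] matter).\<close>
definition distortion :: "(real \<Rightarrow> real) \<Rightarrow> bool" where
  "distortion d \<longleftrightarrow> mono_on {0..1} d \<and> d 0 = 0 \<and> d 1 = 1"

definition right_cont_distortion :: "(real \<Rightarrow> real) \<Rightarrow> bool" where
  "right_cont_distortion d \<longleftrightarrow> distortion d \<and> (\<forall>x\<in>{0..<1}. (d \<longlongrightarrow> d x) (at_right x))"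

definition Td :: "(real \<Rightarrow> real) \<Rightarrow> (real \<Rightarrow> real) \<Rightarrow> (real \<Rightarrow> real)" where
  "Td d F = (\<lambda>x. Lim (at_right x) (\<lambda>y. d (F y)))"

text \<open>T^u(F) = F \<circ> u^{-1}: the CDF of u(X) for X with CDF F, i.e.
  y \<mapsto> P(u(X) \<le> y), computed with the Lebesgue-Stieltjes measure of F.\<close>
definition Tu :: "(real \<Rightarrow> real) \<Rightarrow> (real \<Rightarrow> real) \<Rightarrow> (real \<Rightarrow> real)" where
  "Tu u F = (\<lambda>y. measure (interval_measure F) {x. u x \<le> y})"

definition st_le :: "(real \<Rightarrow> real) \<Rightarrow> (real \<Rightarrow> real) \<Rightarrow> bool" where
  "st_le F G \<longleftrightarrow> (\<forall>x. F x \<ge> G x)"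

definition monotoneT :: "((real \<Rightarrow> real) \<Rightarrow> (real \<Rightarrow> real)) \<Rightarrow> bool" where
  "monotoneT T \<longleftrightarrow> (\<forall>F\<in>cdfM. \<forall>G\<in>cdfM. st_le F G \<longrightarrow> st_le (T F) (T G))"

text \<open>Maps M \<rightarrow> M are compared extensionally on M.
  D^R \<circ> T = {T_d \<circ> T : d right-continuous distortion},
  T \<circ> D^R = {T \<circ> T_d : d right-continuous distortion}; set equality.\<close>
definition commutes_DR :: "((real \<Rightarrow> real) \<Rightarrow> (real \<Rightarrow> real)) \<Rightarrow> bool" where
  "commutes_DR T \<longleftrightarrow>
     (\<forall>d1. right_cont_distortion d1 \<longrightarrow>
        (\<exists>d2. right_cont_distortion d2 \<and> (\<forall>F\<in>cdfM. Td d1 (T F) = T (Td d2 F)))) \<and>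
     (\<forall>d1. right_cont_distortion d1 \<longrightarrow>
        (\<exists>d2. right_cont_distortion d2 \<and> (\<forall>F\<in>cdfM. T (Td d1 F) = Td d2 (T F))))"

end

theory Submission
  imports Defs "HOL-Probability.Distribution_Functions"
begin

lemma cdfM_D:
  assumes "F \<in> cdfM"
  shows "mono F" "\<And>x. continuous (at_right x) F" "\<exists>a b. (\<forall>x<a. F x = 0) \<and> (\<forall>x\<ge>b. F x = 1)"
  using assms unfolding cdfM_def by auto

lemma cdfM_range:
  assumes "F \<in> cdfM" shows "0 \<le> F x" "F x \<le> 1"
proof -
  obtain a b where ab: "\<forall>x<a. F x = 0" "\<forall>x\<ge>b. F x = 1" using cdfM_D(3)[OF assms] by blast
  have m: "mono F" using cdfM_D(1)[OF assms] .
  have "F (min x (a - 1)) \<le> F x" by (rule monoD[OF m]) simp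
  moreover have "F (min x (a - 1)) = 0" using ab(1) by simp
  ultimately show "0 \<le> F x" by simp
  have "F x \<le> F (max x b)" by (rule monoD[OF m]) simp
  moreover have "F (max x b) = 1" using ab(2) by simp
  ultimately show "F x \<le> 1" by simp
qed

lemma rcd_D:
  assumes "right_cont_distortion f"
  shows "mono_on {0..1} f" "f 0 = 0" "f 1 = 1" "\<And>x. 0 \<le> x \<Longrightarrow> x < 1 \<Longrightarrow> (f \<longlongrightarrow> f x) (at_right x)"
  using assms unfolding right_cont_distortion_def distortion_def by auto

lemma rcd_mono:
  assumes "right_cont_distortion f" "0 \<le> r" "r \<le> r'" "r' \<le> 1"
  shows "f r \<le> f r'"
  using rcd_D(1)[OF assms(1)] assms(2-4) by (auto intro: mono_onD)

lemma rcd_range: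
  assumes "right_cont_distortion f" "0 \<le> r" "r \<le> 1"
  shows "0 \<le> f r" "f r \<le> 1"
  using rcd_mono[OF assms(1), of 0 r] rcd_mono[OF assms(1), of r 1] assms rcd_D[OF assms(1)] by auto

lemma comp_tendsto:
  fixes G f :: "real \<Rightarrow> real"
  assumes f: "right_cont_distortion f" and G: "mono G" "\<And>y. 0 \<le> G y" "\<And>y. G y \<le> 1"
    and rc: "continuous (at_right x) G"
  shows "((\<lambda>y. f (G y)) \<longlongrightarrow> f (G x)) (at_right x)"
proof (cases "G x = 1")
  case True
  have "eventually (\<lambda>y. f (G y) = f (G x)) (at_right x)"
    unfolding eventually_at_right_field
  proof (intro exI[of _ "x+1"] conjI allI impI)
    fix y assume "x < y" "y < x + 1"
    then have "G x \<le> G y" using G(1) by (simp add: monoD)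
    then have "G y = G x" using True G(3)[of y] by simp
    then show "f (G y) = f (G x)" by simp
  qed simp
  then show ?thesis by (rule tendsto_eventually)
next
  case False
  then have Gx: "0 \<le> G x" "G x < 1" using G(2,3)[of x] by auto
  have fr: "(f \<longlongrightarrow> f (G x)) (at_right (G x))" using rcd_D(4)[OF f Gx] .
  have Gt: "(G \<longlongrightarrow> G x) (at_right x)" using rc by (simp add: continuous_within)
  show ?thesis
    unfolding tendsto_iff
  proof (intro allI impI)
    fix e :: real assume e: "e > 0"
    from fr e have "eventually (\<lambda>w. dist (f w) (f (G x)) < e) (at_right (G x))"
      by (simp add: tendsto_iff)
    then obtain b where b: "b > G x" "\<And>w. G x < w \<Longrightarrow> w < b \<Longrightarrow> dist (f w) (f (G x)) < e"
      unfolding eventually_at_right_field by blast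
    have "eventually (\<lambda>y. G y < b) (at_right x)"
      using Gt b(1) by (rule order_tendstoD)
    moreover have "eventually (\<lambda>y. G x \<le> G y) (at_right x)"
      unfolding eventually_at_right_field
      by (intro exI[of _ "x+1"]) (auto simp: monoD[OF G(1)])
    ultimately show "eventually (\<lambda>y. dist (f (G y)) (f (G x)) < e) (at_right x)"
    proof eventually_elim
      case (elim y)
      show ?case
      proof (cases "G y = G x")
        case True then show ?thesis using e by simp
      next
        case False then show ?thesis using elim b(2)[of "G y"] by simp
      qed
    qed
  qed
qed

lemma Lim_at_right_eq:
  assumes "(g \<longlongrightarrow> l) (at_right (x::real))"
  shows "Lim (at_right x) g = l"
  using assms by (intro tendsto_Lim) simp_all

lemma Td_eq_gen:
  assumes f: "right_cont_distortion f" and G: "mono G" "\<And>y. 0 \<le> G y" "\<And>y. G y \<le> 1"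
    and rc: "\<And>x. continuous (at_right x) G"
  shows "Td f G = (\<lambda>x. f (G x))"
  unfolding Td_def
  by (rule ext, rule Lim_at_right_eq, rule comp_tendsto[OF f G rc])

lemma Td_eq:
  assumes f: "right_cont_distortion f" and F: "F \<in> cdfM"
  shows "Td f F = (\<lambda>x. f (F x))"
  using Td_eq_gen[OF f cdfM_D(1)[OF F] cdfM_range[OF F] cdfM_D(2)[OF F]] .

lemma comp_cdfM:
  assumes f: "right_cont_distortion f" and F: "F \<in> cdfM"
  shows "(\<lambda>x. f (F x)) \<in> cdfM"
proof -
  obtain a b where ab: "\<forall>x<a. F x = 0" "\<forall>x\<ge>b. F x = 1" using cdfM_D(3)[OF F] by blast
  have "mono (\<lambda>x. f (F x))"
    by (rule monoI, rule rcd_mono[OF f]) (auto simp: cdfM_range[OF F] monoD[OF cdfM_D(1)[OF F]])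
  moreover have "continuous (at_right x) (\<lambda>x. f (F x))" for x
    unfolding continuous_within
    using comp_tendsto[OF f cdfM_D(1)[OF F] cdfM_range[OF F] cdfM_D(2)[OF F]] by simp
  moreover have "(\<forall>x<a. f (F x) = 0) \<and> (\<forall>x\<ge>b. f (F x) = 1)"
    using ab rcd_D(2,3)[OF f] by simp
  ultimately show ?thesis unfolding cdfM_def by blast
qed



definition delta :: "real \<Rightarrow> real \<Rightarrow> real" where "delta c = (\<lambda>y. if c \<le> y then 1 else 0)"
definition stepf :: "real \<Rightarrow> real \<Rightarrow> real" where "stepf t = (\<lambda>r. if t \<le> r then 1 else 0)"
definition Qf :: "(real \<Rightarrow> real) \<Rightarrow> real \<Rightarrow> real" where "Qf F t = Inf {y. t \<le> F y}"
definition thr :: "(real \<Rightarrow> real) \<Rightarrow> real" where "thr f = Inf {r \<in> {0..1}. f r = 1}"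
definition twop :: "real \<Rightarrow> real \<Rightarrow> real \<Rightarrow> real \<Rightarrow> real" where
  "twop a b r = (\<lambda>z. if z < a then 0 else if z < b then r else 1)"
definition unif :: "real \<Rightarrow> real \<Rightarrow> real" where
  "unif x = (\<lambda>z. max 0 (min 1 (z - x + 1)))"

lemma ev_const_cont:
  fixes f :: "real \<Rightarrow> real"
  assumes "eventually (\<lambda>z. f z = f x) (at_right x)"
  shows "continuous (at_right x) f"
  unfolding continuous_within using assms by (simp add: tendsto_eventually)

lemma delta_cdfM: "delta c \<in> cdfM"
proof -
  have "mono (delta c)" unfolding delta_def by (rule monoI) auto
  moreover have "continuous (at_right x) (delta c)" for x
  proof (rule ev_const_cont)
    show "eventually (\<lambda>z. delta c z = delta c x) (at_right x)"
    proof (cases "c \<le> x")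
      case True then show ?thesis unfolding eventually_at_right_field delta_def
        by (intro exI[of _ "x+1"]) auto
    next
      case False then show ?thesis unfolding eventually_at_right_field delta_def
        by (intro exI[of _ c]) auto
    qed
  qed
  moreover have "(\<forall>x<c. delta c x = 0) \<and> (\<forall>x\<ge>c. delta c x = 1)" unfolding delta_def by auto
  ultimately show ?thesis unfolding cdfM_def by blast
qed

lemma stepf_rcd: assumes "0 < t" "t \<le> 1" shows "right_cont_distortion (stepf t)"
  unfolding right_cont_distortion_def distortion_def
proof (intro conjI ballI)
  show "mono_on {0..1} (stepf t)" unfolding stepf_def by (rule mono_onI) auto
  show "stepf t 0 = 0" "stepf t 1 = 1" using assms unfolding stepf_def by auto
  fix x :: real assume x: "x \<in> {0..<1}"
  have "eventually (\<lambda>z. stepf t z = stepf t x) (at_right x)"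
  proof (cases "t \<le> x")
    case True then show ?thesis unfolding eventually_at_right_field stepf_def
      by (intro exI[of _ "x+1"]) auto
  next
    case False then show ?thesis unfolding eventually_at_right_field stepf_def
      by (intro exI[of _ t]) auto
  qed
  then show "(stepf t \<longlongrightarrow> stepf t x) (at_right x)" by (rule tendsto_eventually)
qed

lemma Q_iff:
  assumes F: "F \<in> cdfM" and t: "0 < t" "t \<le> 1"
  shows "t \<le> F y \<longleftrightarrow> Qf F t \<le> y"
proof -
  obtain a b where ab: "\<forall>x<a. F x = 0" "\<forall>x\<ge>b. F x = 1" using cdfM_D(3)[OF F] by blast
  define S where "S = {y. t \<le> F y}"
  have bS: "b \<in> S" using ab t unfolding S_def by auto
  have lb: "a \<le> s" if "s \<in> S" for s
  proof (rule ccontr)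
    assume "\<not> a \<le> s" then have "F s = 0" using ab(1) by simp
    then show False using that t unfolding S_def by simp
  qed
  have bdd: "bdd_below S" using lb by (rule bdd_belowI)
  have mF: "mono F" using cdfM_D(1)[OF F] .
  have q: "t \<le> F (Inf S)"
  proof (rule tendsto_lowerbound)
    show "(F \<longlongrightarrow> F (Inf S)) (at_right (Inf S))"
      using cdfM_D(2)[OF F] by (simp add: continuous_within)
    show "eventually (\<lambda>z. t \<le> F z) (at_right (Inf S))"
      unfolding eventually_at_right_field
    proof (intro exI[of _ "Inf S + 1"] conjI allI impI)
      fix z assume "Inf S < z" "z < Inf S + 1"
      then obtain s where "s \<in> S" "s < z" using cInf_less_iff[of S z] bS bdd by auto
      then show "t \<le> F z" unfolding S_def using monoD[OF mF, of s z] by auto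
    qed simp
  qed simp
  show ?thesis
  proof
    assume "t \<le> F y" then have "y \<in> S" unfolding S_def by simp
    then show "Qf F t \<le> y" unfolding Qf_def S_def[symmetric] using bdd by (rule cInf_lower)
  next
    assume "Qf F t \<le> y"
    then show "t \<le> F y" using q monoD[OF mF, of "Inf S" y] unfolding Qf_def S_def by auto
  qed
qed

lemma Q_unique:
  assumes F: "F \<in> cdfM" and t: "0 < t" "t \<le> 1" and h: "\<And>y. t \<le> F y \<longleftrightarrow> q \<le> y"
  shows "Qf F t = q"
proof -
  have "Qf F t \<le> q" using Q_iff[OF F t, of q] h[of q] by simp
  moreover have "q \<le> Qf F t" using Q_iff[OF F t, of "Qf F t"] h[of "Qf F t"] by simp
  ultimately show ?thesis by simp
qed

lemma delta_eq_Q: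
  assumes F: "F \<in> cdfM" and t: "0 < t" "t \<le> 1"
  shows "(\<lambda>y. stepf t (F y)) = delta (Qf F t)"
  using Q_iff[OF F t] unfolding stepf_def delta_def by auto

lemma Td_step:
  assumes F: "F \<in> cdfM" and t: "0 < t" "t \<le> 1"
  shows "Td (stepf t) F = delta (Qf F t)"
  using Td_eq[OF stepf_rcd[OF t] F] delta_eq_Q[OF F t] by simp

lemma Q_delta: assumes "0 < t" "t \<le> 1" shows "Qf (delta c) t = c"
proof (rule Q_unique[OF delta_cdfM assms])
  fix y show "t \<le> delta c y \<longleftrightarrow> c \<le> y" using assms unfolding delta_def by auto
qed

lemma delta_inj: assumes "delta p = delta q" shows "p = q"
proof -
  have "p = Qf (delta p) 1" using Q_delta[of 1 p] by simp
  also have "\<dots> = Qf (delta q) 1" using assms by simp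
  also have "\<dots> = q" using Q_delta[of 1 q] by simp
  finally show ?thesis .
qed

lemma thr_prop:
  assumes f: "right_cont_distortion f"
  shows "0 < thr f" "thr f \<le> 1" "\<And>r. 0 \<le> r \<Longrightarrow> r \<le> 1 \<Longrightarrow> f r = 1 \<longleftrightarrow> thr f \<le> r"
proof -
  define A where "A = {r \<in> {0..1}. f r = 1}"
  have A1: "1 \<in> A" using rcd_D(3)[OF f] unfolding A_def by simp
  have bdd: "bdd_below A" unfolding A_def by (auto intro: bdd_belowI[of _ 0])
  have t1: "thr f \<le> 1" unfolding thr_def A_def[symmetric] using A1 bdd by (rule cInf_lower)
  have t0: "0 \<le> thr f" unfolding thr_def A_def[symmetric]
    using A1 by (intro cInf_greatest) (auto simp: A_def)
  have iff: "f r = 1 \<longleftrightarrow> thr f \<le> r" if r: "0 \<le> r" "r \<le> 1" for r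
  proof
    assume "f r = 1" then have "r \<in> A" using r unfolding A_def by simp
    then show "thr f \<le> r" unfolding thr_def A_def[symmetric] using bdd by (rule cInf_lower)
  next
    assume le: "thr f \<le> r"
    have below: "f z = 1" if z: "thr f < z" "z \<le> 1" for z
    proof -
      obtain s where s: "s \<in> A" "s < z" using cInf_less_iff[of A z] A1 bdd z
        unfolding thr_def A_def[symmetric] by auto
      have "f s \<le> f z" using s z t0 unfolding A_def by (intro rcd_mono[OF f]) auto
      moreover have "f z \<le> 1" using rcd_range[OF f, of z] s z unfolding A_def by auto
      ultimately show "f z = 1" using s unfolding A_def by simp
    qed
    show "f r = 1"
    proof (cases "thr f < r")
      case True then show ?thesis using below r by simp
    next
      case False
      then have eq: "r = thr f" using le by simp
      show ?thesis
      proof (cases "r = 1")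
        case True then show ?thesis using rcd_D(3)[OF f] by simp
      next
        case False
        then have "r < 1" using r by simp
        then have lim: "(f \<longlongrightarrow> f r) (at_right r)" using rcd_D(4)[OF f] r by simp
        have "eventually (\<lambda>z. f z = 1) (at_right r)"
          unfolding eventually_at_right_field
          using below eq \<open>r < 1\<close> by (intro exI[of _ 1]) auto
        then have "(f \<longlongrightarrow> 1) (at_right r)" by (rule tendsto_eventually)
        from tendsto_unique[OF _ lim this] show ?thesis by simp
      qed
    qed
  qed
  show "0 < thr f"
    using iff[of 0] rcd_D(2)[OF f] t0 by force
  show "thr f \<le> 1" by (rule t1)
  show "\<And>r. 0 \<le> r \<Longrightarrow> r \<le> 1 \<Longrightarrow> f r = 1 \<longleftrightarrow> thr f \<le> r" by (rule iff)
qed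

lemma twop_cdfM: assumes "a < b" "0 \<le> r" "r \<le> 1" shows "twop a b r \<in> cdfM"
proof -
  have "mono (twop a b r)" unfolding twop_def using assms by (intro monoI) auto
  moreover have "continuous (at_right x) (twop a b r)" for x
  proof (rule ev_const_cont)
    show "eventually (\<lambda>z. twop a b r z = twop a b r x) (at_right x)"
    proof (cases "x < a")
      case True then show ?thesis unfolding eventually_at_right_field twop_def
        by (intro exI[of _ a]) auto
    next
      case False note F1 = this
      show ?thesis
      proof (cases "x < b")
        case True then show ?thesis using F1 unfolding eventually_at_right_field twop_def
          by (intro exI[of _ b]) auto
      next
        case False then show ?thesis using F1 unfolding eventually_at_right_field twop_def
          by (intro exI[of _ "x+1"]) auto
      qed
    qed
  qed
  moreover have "(\<forall>x<a. twop a b r x = 0) \<and> (\<forall>x\<ge>b. twop a b r x = 1)"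
    unfolding twop_def using assms by auto
  ultimately show ?thesis unfolding cdfM_def by blast
qed

lemma Q_twop:
  assumes "a < b" "0 \<le> r" "r \<le> 1" "0 < s" "s \<le> 1"
  shows "Qf (twop a b r) s = (if s \<le> r then a else b)"
proof (rule Q_unique[OF twop_cdfM[OF assms(1-3)] assms(4,5)])
  fix y show "s \<le> twop a b r y \<longleftrightarrow> (if s \<le> r then a else b) \<le> y"
    using assms unfolding twop_def by auto
qed

lemma unif_cdfM: "unif x \<in> cdfM"
proof -
  have "mono (unif x)" unfolding unif_def by (intro monoI) auto
  moreover have "continuous (at_right z) (unif x)" for z
    unfolding unif_def by (intro continuous_intros)
  moreover have "(\<forall>z<x-1. unif x z = 0) \<and> (\<forall>z\<ge>x. unif x z = 1)"
    unfolding unif_def by auto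
  ultimately show ?thesis unfolding cdfM_def by blast
qed

lemma Q_unif: assumes "0 < s" "s \<le> 1" shows "Qf (unif x) s = x - 1 + s"
proof (rule Q_unique[OF unif_cdfM assms])
  fix y show "s \<le> unif x y \<longleftrightarrow> x - 1 + s \<le> y"
    using assms unfolding unif_def by auto
qed



lemma cdfM_lims:
  assumes F: "F \<in> cdfM"
  shows "(F \<longlongrightarrow> 0) at_bot" "(F \<longlongrightarrow> 1) at_top"
proof -
  obtain a b where ab: "\<forall>x<a. F x = 0" "\<forall>x\<ge>b. F x = 1" using cdfM_D(3)[OF F] by blast
  have "eventually (\<lambda>x. F x = 0) at_bot"
    unfolding eventually_at_bot_linorder using ab(1) by (intro exI[of _ "a - 1"]) auto
  then show "(F \<longlongrightarrow> 0) at_bot" by (rule tendsto_eventually)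
  have "eventually (\<lambda>x. F x = 1) at_top"
    unfolding eventually_at_top_linorder using ab(2) by (intro exI[of _ b]) auto
  then show "(F \<longlongrightarrow> 1) at_top" by (rule tendsto_eventually)
qed

lemma cdfM_mono': "F \<in> cdfM \<Longrightarrow> x \<le> y \<Longrightarrow> F x \<le> F y"
  using cdfM_D(1) monoD by blast

lemma meas_Iic: "F \<in> cdfM \<Longrightarrow> measure (interval_measure F) {..x} = F x"
  by (rule measure_interval_measure_Iic[OF cdfM_mono' cdfM_D(2) cdfM_lims(1)]) auto

lemma realdist: "F \<in> cdfM \<Longrightarrow> real_distribution (interval_measure F)"
  by (rule real_distribution_interval_measure[OF cdfM_mono' cdfM_D(2) cdfM_lims]) auto

lemma meas_UNIV: "F \<in> cdfM \<Longrightarrow> measure (interval_measure F) UNIV = 1"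
proof -
  assume F: "F \<in> cdfM"
  interpret real_distribution "interval_measure F" using realdist[OF F] .
  show ?thesis using prob_space by simp
qed

lemma Sy_struct:
  fixes u :: "real \<Rightarrow> real"
  assumes u: "mono u" "\<forall>x. continuous (at_left x) u"
  shows "{x. u x \<le> y} = {} \<or> {x. u x \<le> y} = UNIV \<or> {x. u x \<le> y} = {..Sup {x. u x \<le> y}}"
proof -
  define S where "S = {x. u x \<le> y}"
  have down: "x' \<in> S" if "x \<in> S" "x' \<le> x" for x x'
    using that monoD[OF u(1), of x' x] unfolding S_def by auto
  have "S = {} \<or> S = UNIV \<or> S = {..Sup S}"
  proof (cases "S = {}")
    case True then show ?thesis by simp
  next
    case ne: False
    show ?thesis
    proof (cases "bdd_above S")
      case False
      have "S = UNIV"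
      proof (intro set_eqI iffI)
        fix x
        from False obtain s where "s \<in> S" "x < s" unfolding bdd_above_def by (meson not_le)
        then show "x \<in> S" using down by simp
      qed simp
      then show ?thesis by simp
    next
      case bdd: True
      define c where "c = Sup S"
      have lt: "x \<in> S" if "x < c" for x
      proof -
        have "x < Sup S" using that c_def by simp
        then obtain s where "s \<in> S" "x < s" using less_cSup_iff[OF ne bdd, of x] by blast
        then show ?thesis using down by simp
      qed
      have "u c \<le> y"
      proof (rule tendsto_upperbound)
        show "(u \<longlongrightarrow> u c) (at_left c)" using u(2) by (simp add: continuous_within)
        show "eventually (\<lambda>z. u z \<le> y) (at_left c)"
          unfolding eventually_at_left_field using lt unfolding S_def
          by (intro exI[of _ "c - 1"]) auto
      qed simp
      then have "c \<in> S" unfolding S_def by simp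
      have "S = {..c}"
      proof (intro set_eqI iffI)
        fix x assume "x \<in> S" then show "x \<in> {..c}" using bdd unfolding c_def by (simp add: cSup_upper)
      next
        fix x assume "x \<in> {..c}" then show "x \<in> S" using \<open>c \<in> S\<close> down by simp
      qed
      then show ?thesis unfolding c_def by simp
    qed
  qed
  then show ?thesis unfolding S_def .
qed

lemma Tu_formula:
  fixes u :: "real \<Rightarrow> real"
  assumes F: "F \<in> cdfM" and u: "mono u" "\<forall>x. continuous (at_left x) u"
  shows "Tu u F y = (if {x. u x \<le> y} = {} then 0 else if {x. u x \<le> y} = UNIV then 1
                     else F (Sup {x. u x \<le> y}))"
proof -
  define S where "S = {x. u x \<le> y}"
  have T: "Tu u F y = measure (interval_measure F) S" unfolding Tu_def S_def by simp
  have "S = {} \<or> S = UNIV \<or> S = {..Sup S}" using Sy_struct[OF u, of y] unfolding S_def .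
  then have "measure (interval_measure F) S = (if S = {} then 0 else if S = UNIV then 1 else F (Sup S))"
  proof (elim disjE)
    assume "S = {}" then show ?thesis by simp
  next
    assume "S = UNIV" then show ?thesis using meas_UNIV[OF F] by simp
  next
    assume h: "S = {..Sup S}"
    then have "S \<noteq> {}" "S \<noteq> UNIV" by auto
    then show ?thesis using meas_Iic[OF F, of "Sup S"] h by simp
  qed
  then show ?thesis using T unfolding S_def by simp
qed

lemma Tu_comp:
  fixes u :: "real \<Rightarrow> real"
  assumes f: "right_cont_distortion f" and F: "F \<in> cdfM" and u: "mono u" "\<forall>x. continuous (at_left x) u"
  shows "Tu u (\<lambda>x. f (F x)) = (\<lambda>y. f (Tu u F y))"
proof
  fix y
  show "Tu u (\<lambda>x. f (F x)) y = f (Tu u F y)"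
    unfolding Tu_formula[OF F u] Tu_formula[OF comp_cdfM[OF f F] u]
    using rcd_D(2,3)[OF f] by simp
qed

lemma Tu_cdfM:
  fixes u :: "real \<Rightarrow> real"
  assumes F: "F \<in> cdfM" and u: "mono u" "\<forall>x. continuous (at_left x) u"
  shows "Tu u F \<in> cdfM"
proof -
  let ?M = "interval_measure F"
  interpret P: real_distribution ?M using realdist[OF F] .
  define N where "N = distr ?M borel u"
  have um: "u \<in> borel_measurable ?M"
    by (subst measurable_cong_sets[OF sets_interval_measure refl]) (rule borel_measurable_mono[OF u(1)])
  interpret real_distribution N unfolding N_def by (rule P.real_distribution_distr[OF um])
  have eq: "Tu u F = cdf N"
  proof
    fix y
    have "cdf N y = measure N {..y}" by (simp add: cdf_def)
    also have "\<dots> = measure ?M (u -` {..y} \<inter> space ?M)"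
      unfolding N_def by (rule measure_distr[OF um]) simp
    also have "\<dots> = Tu u F y" unfolding Tu_def by (simp add: vimage_def)
    finally show "Tu u F y = cdf N y" by simp
  qed
  obtain a b where ab: "\<forall>x<a. F x = 0" "\<forall>x\<ge>b. F x = 1" using cdfM_D(3)[OF F] by blast
  have "mono (Tu u F)" unfolding eq by (intro monoI cdf_nondecreasing)
  moreover have "continuous (at_right x) (Tu u F)" for x unfolding eq by (rule cdf_is_right_cont)
  moreover have "\<forall>y<u a. Tu u F y = 0"
  proof (intro allI impI)
    fix y assume y: "y < u a"
    have na: "a \<notin> {x. u x \<le> y}" using y by simp
    show "Tu u F y = 0"
    proof (cases "{x. u x \<le> y} = {} \<or> {x. u x \<le> y} = UNIV")
      case True then have "{x. u x \<le> y} = {}" using na by blast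
      then show ?thesis unfolding Tu_formula[OF F u] by simp
    next
      case False
      then have S: "{x. u x \<le> y} = {..Sup {x. u x \<le> y}}" using Sy_struct[OF u, of y] by blast
      have "a \<notin> {..Sup {x. u x \<le> y}}" using na S by blast
      then have "Sup {x. u x \<le> y} < a" by simp
      then show ?thesis unfolding Tu_formula[OF F u] using False ab(1) by simp
    qed
  qed
  moreover have "\<forall>y\<ge>u b. Tu u F y = 1"
  proof (intro allI impI)
    fix y assume y: "u b \<le> y"
    have nb: "b \<in> {x. u x \<le> y}" using y by simp
    show "Tu u F y = 1"
    proof (cases "{x. u x \<le> y} = {} \<or> {x. u x \<le> y} = UNIV")
      case True then have "{x. u x \<le> y} = UNIV" using nb by blast
      then show ?thesis unfolding Tu_formula[OF F u] by simp
    next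
      case False
      then have S: "{x. u x \<le> y} = {..Sup {x. u x \<le> y}}" using Sy_struct[OF u, of y] by blast
      have "b \<in> {..Sup {x. u x \<le> y}}" using nb S by blast
      then have "b \<le> Sup {x. u x \<le> y}" by simp
      then show ?thesis unfolding Tu_formula[OF F u] using False ab(2) by simp
    qed
  qed
  ultimately show ?thesis unfolding cdfM_def by blast
qed



definition homeo01 :: "(real \<Rightarrow> real) \<Rightarrow> bool" where
  "homeo01 h \<longleftrightarrow> strict_mono_on {0..1} h \<and> continuous_on {0..1} h \<and> h 0 = 0 \<and> h 1 = 1"

lemma homeo_strict: "homeo01 h \<Longrightarrow> 0 \<le> x \<Longrightarrow> x < y \<Longrightarrow> y \<le> 1 \<Longrightarrow> h x < h y"
  unfolding homeo01_def by (intro strict_mono_onD[of "{0..1}" h]) auto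

lemma homeo_mono: assumes "homeo01 h" "0 \<le> x" "x \<le> y" "y \<le> 1" shows "h x \<le> h y"
proof (cases "x = y")
  case False then have "x < y" using assms by simp
  then show ?thesis using homeo_strict[OF assms(1,2) _ assms(4)] by (simp add: less_imp_le)
qed simp

lemma homeo_range: assumes "homeo01 h" "0 \<le> x" "x \<le> 1" shows "0 \<le> h x" "h x \<le> 1"
  using homeo_mono[OF assms(1), of 0 x] homeo_mono[OF assms(1), of x 1] assms
  unfolding homeo01_def by auto

lemma homeo_image: assumes h: "homeo01 h" shows "h ` {0..1} = {0..1}"
proof
  show "h ` {0..1} \<subseteq> {0..1}" using homeo_range[OF h] by auto
  show "{0..1} \<subseteq> h ` {0..1}"
  proof
    fix y :: real assume y: "y \<in> {0..1}"
    have "\<exists>x\<ge>0. x \<le> 1 \<and> h x = y"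
      using h y unfolding homeo01_def by (intro IVT') auto
    then show "y \<in> h ` {0..1}" by force
  qed
qed

lemma homeo_inj: "homeo01 h \<Longrightarrow> inj_on h {0..1}"
  unfolding homeo01_def using strict_mono_on_imp_inj_on by blast

definition hinv :: "(real \<Rightarrow> real) \<Rightarrow> real \<Rightarrow> real" where "hinv h = inv_into {0..1} h"

lemma hinv_f: "homeo01 h \<Longrightarrow> 0 \<le> x \<Longrightarrow> x \<le> 1 \<Longrightarrow> hinv h (h x) = x"
  unfolding hinv_def using homeo_inj inv_into_f_f by fastforce

lemma f_hinv: "homeo01 h \<Longrightarrow> 0 \<le> y \<Longrightarrow> y \<le> 1 \<Longrightarrow> h (hinv h y) = y"
  unfolding hinv_def using homeo_image f_inv_into_f by (metis atLeastAtMost_iff)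

lemma hinv_range: "homeo01 h \<Longrightarrow> 0 \<le> y \<Longrightarrow> y \<le> 1 \<Longrightarrow> hinv h y \<in> {0..1}"
  unfolding hinv_def using homeo_image inv_into_into by (metis atLeastAtMost_iff)

lemma hinv_homeo: assumes h: "homeo01 h" shows "homeo01 (hinv h)"
  unfolding homeo01_def
proof (intro conjI)
  show "strict_mono_on {0..1} (hinv h)"
  proof (rule strict_mono_onI)
    fix r s :: real assume rs: "r \<in> {0..1}" "s \<in> {0..1}" "r < s"
    show "hinv h r < hinv h s"
    proof (rule ccontr)
      assume "\<not> hinv h r < hinv h s"
      then have "hinv h s \<le> hinv h r" by simp
      then have "h (hinv h s) \<le> h (hinv h r)"
        using hinv_range[OF h, of r] hinv_range[OF h, of s] rs by (intro homeo_mono[OF h]) auto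
      then show False using f_hinv[OF h, of r] f_hinv[OF h, of s] rs by auto
    qed
  qed
  have "continuous_on (h ` {0..1}) (hinv h)"
    by (rule continuous_on_inv) (use h hinv_f[OF h] in \<open>auto simp: homeo01_def\<close>)
  then show "continuous_on {0..1} (hinv h)" using homeo_image[OF h] by simp
  show "hinv h 0 = 0" using hinv_f[OF h, of 0] h unfolding homeo01_def by simp
  show "hinv h 1 = 1" using hinv_f[OF h, of 1] h unfolding homeo01_def by simp
qed

lemma homeo_tendsto_right:
  assumes h: "homeo01 h" and x: "0 \<le> x" "x < 1"
  shows "(h \<longlongrightarrow> h x) (at_right x)"
proof -
  have "(h \<longlongrightarrow> h x) (at x within {0..1})" using h x unfolding homeo01_def continuous_on_def by auto
  then have "(h \<longlongrightarrow> h x) (at x within {x..1})" by (rule tendsto_within_subset) (use x in auto)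
  then show ?thesis using at_within_Icc_at_right[OF x(2)] by simp
qed

lemma homeo_rcd: assumes h: "homeo01 h" shows "right_cont_distortion h"
  unfolding right_cont_distortion_def distortion_def
proof (intro conjI ballI)
  show "mono_on {0..1} h" by (rule mono_onI) (use homeo_mono[OF h] in auto)
  show "h 0 = 0" "h 1 = 1" using h unfolding homeo01_def by auto
  fix x :: real assume "x \<in> {0..<1}"
  then show "(h \<longlongrightarrow> h x) (at_right x)" using homeo_tendsto_right[OF h] by auto
qed

lemma homeo_filterlim:
  assumes h: "homeo01 h" and x: "0 \<le> x" "x < 1"
  shows "filterlim h (at_right (h x)) (at_right x)"
  unfolding filterlim_at
proof
  show "(h \<longlongrightarrow> h x) (at_right x)" by (rule homeo_tendsto_right[OF h x])
  show "eventually (\<lambda>z. h z \<in> {h x<..} \<and> h z \<noteq> h x) (at_right x)"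
    unfolding eventually_at_right_field
    using homeo_strict[OF h x(1)] x by (intro exI[of _ 1]) force
qed

lemma comp_rcd:
  assumes f: "right_cont_distortion f" and g: "homeo01 g" and h: "homeo01 h"
  shows "right_cont_distortion (\<lambda>x. g (f (h x)))"
  unfolding right_cont_distortion_def distortion_def
proof (intro conjI ballI)
  show "mono_on {0..1} (\<lambda>x. g (f (h x)))"
  proof (rule mono_onI)
    fix r s :: real assume rs: "r \<in> {0..1}" "s \<in> {0..1}" "r \<le> s"
    have "h r \<le> h s" using rs by (intro homeo_mono[OF h]) auto
    then have "f (h r) \<le> f (h s)" using homeo_range[OF h, of r] homeo_range[OF h, of s] rs
      by (intro rcd_mono[OF f]) auto
    then show "g (f (h r)) \<le> g (f (h s))"
      using homeo_range[OF h, of r] homeo_range[OF h, of s] rs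
        rcd_range[OF f, of "h r"] rcd_range[OF f, of "h s"]
      by (intro homeo_mono[OF g]) auto
  qed
  show "g (f (h 0)) = 0" "g (f (h 1)) = 1" using g h rcd_D(2,3)[OF f] unfolding homeo01_def by auto
  fix x :: real assume "x \<in> {0..<1}"
  then have x: "0 \<le> x" "x < 1" by auto
  have hx: "0 \<le> h x" "h x < 1" using homeo_range[OF h, of x] homeo_strict[OF h, of x 1] x h
    unfolding homeo01_def by auto
  have "((\<lambda>z. f (h z)) \<longlongrightarrow> f (h x)) (at_right x)"
    by (rule filterlim_compose[OF rcd_D(4)[OF f hx] homeo_filterlim[OF h x]])
  moreover have "f (h x) \<in> {0..1}" using rcd_range[OF f, of "h x"] hx by auto
  moreover have "eventually (\<lambda>z. f (h z) \<in> {0..1}) (at_right x)"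
    unfolding eventually_at_right_field
  proof (intro exI[of _ 1] conjI allI impI)
    fix z assume "x < z" "z < 1"
    then show "f (h z) \<in> {0..1}" using homeo_range[OF h, of z] rcd_range[OF f, of "h z"] x by auto
  qed (use x in simp)
  ultimately show "((\<lambda>x. g (f (h x))) \<longlongrightarrow> g (f (h x))) (at_right x)"
    using g unfolding homeo01_def by (intro continuous_on_tendsto_compose[of "{0..1}" g]) auto
qed

lemma dir2:
  fixes T :: "(real \<Rightarrow> real) \<Rightarrow> (real \<Rightarrow> real)"
  assumes u: "mono u" "\<forall>x. continuous (at_left x) u"
    and d: "distortion d" "strict_mono_on {0..1} d" "continuous_on {0..1} d"
    and TF: "\<forall>F\<in>cdfM. T F = Td d (Tu u F)"
  shows "commutes_DR T"
proof -
  have hd: "homeo01 d" using d unfolding homeo01_def distortion_def by auto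
  have rd: "right_cont_distortion d" by (rule homeo_rcd[OF hd])
  have hs: "homeo01 (hinv d)" by (rule hinv_homeo[OF hd])
  have GM: "Tu u F \<in> cdfM" if "F \<in> cdfM" for F by (rule Tu_cdfM[OF that u])
  have TF': "T F = (\<lambda>y. d (Tu u F y))" if F: "F \<in> cdfM" for F
    using TF F Td_eq[OF rd GM[OF F]] by simp
  have GR: "0 \<le> Tu u F y" "Tu u F y \<le> 1" if "F \<in> cdfM" for F y using cdfM_range[OF GM[OF that]] by auto
  show ?thesis unfolding commutes_DR_def
  proof (intro conjI allI impI)
    fix d1 assume d1: "right_cont_distortion d1"
    define d2 where "d2 = (\<lambda>x. hinv d (d1 (d x)))"
    have rd2: "right_cont_distortion d2" unfolding d2_def by (rule comp_rcd[OF d1 hs hd])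
    show "\<exists>d2. right_cont_distortion d2 \<and> (\<forall>F\<in>cdfM. Td d1 (T F) = T (Td d2 F))"
    proof (intro exI[of _ d2] conjI ballI rd2)
      fix F assume F: "F \<in> cdfM"
      have "Td d1 (T F) = (\<lambda>y. d1 (d (Tu u F y)))"
        unfolding TF'[OF F] using Td_eq[OF d1 comp_cdfM[OF rd GM[OF F]]] by simp
      also have "\<dots> = (\<lambda>y. d (d2 (Tu u F y)))"
      proof
        fix y
        have "d1 (d (Tu u F y)) \<in> {0..1}"
          using rcd_range[OF d1] homeo_range[OF hd] GR[OF F, of y] by auto
        then show "d1 (d (Tu u F y)) = d (d2 (Tu u F y))" unfolding d2_def using f_hinv[OF hd] by auto
      qed
      also have "\<dots> = T (Td d2 F)"
        unfolding Td_eq[OF rd2 F] TF'[OF comp_cdfM[OF rd2 F]] Tu_comp[OF rd2 F u] by simp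
      finally show "Td d1 (T F) = T (Td d2 F)" .
    qed
  next
    fix d1 assume d1: "right_cont_distortion d1"
    define d2 where "d2 = (\<lambda>x. d (d1 (hinv d x)))"
    have rd2: "right_cont_distortion d2" unfolding d2_def by (rule comp_rcd[OF d1 hd hs])
    show "\<exists>d2. right_cont_distortion d2 \<and> (\<forall>F\<in>cdfM. T (Td d1 F) = Td d2 (T F))"
    proof (intro exI[of _ d2] conjI ballI rd2)
      fix F assume F: "F \<in> cdfM"
      have "T (Td d1 F) = (\<lambda>y. d (d1 (Tu u F y)))"
        unfolding Td_eq[OF d1 F] TF'[OF comp_cdfM[OF d1 F]] Tu_comp[OF d1 F u] by simp
      also have "\<dots> = (\<lambda>y. d2 (d (Tu u F y)))"
        unfolding d2_def using hinv_f[OF hd] GR[OF F] by simp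
      also have "\<dots> = Td d2 (T F)"
        unfolding TF'[OF F] using Td_eq[OF rd2 comp_cdfM[OF rd GM[OF F]]] by simp
      finally show "T (Td d1 F) = Td d2 (T F)" .
    qed
  qed
qed



lemma le_iff_eq: fixes p q :: real assumes "\<And>y. p \<le> y \<longleftrightarrow> q \<le> y" shows "p = q"
  using assms[of p] assms[of q] by simp

lemma eq01:
  fixes p q :: real
  assumes "0 \<le> p" "p \<le> 1" "0 \<le> q" "q \<le> 1" and h: "\<And>t. 0 < t \<Longrightarrow> t \<le> 1 \<Longrightarrow> t \<le> p \<longleftrightarrow> t \<le> q"
  shows "p = q"
proof (rule ccontr)
  assume "p \<noteq> q"
  then consider "p < q" | "q < p" by linarith
  then show False
  proof cases
    case 1 then have "0 < q" using assms by simp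
    then have "q \<le> p" using h[of q] assms(4) by simp
    then show False using 1 by simp
  next
    case 2 then have "0 < p" using assms by simp
    then have "p \<le> q" using h[of p] assms(2) by simp
    then show False using 2 by simp
  qed
qed

lemma delta_val: "delta c y = 1 \<longleftrightarrow> c \<le> y" unfolding delta_def by simp

lemma st_le_delta: "x \<le> y \<Longrightarrow> st_le (delta x) (delta y)"
  unfolding st_le_def delta_def by auto

locale dirctx =
  fixes T :: "(real \<Rightarrow> real) \<Rightarrow> real \<Rightarrow> real"
  assumes TM: "\<And>F. F \<in> cdfM \<Longrightarrow> T F \<in> cdfM" and mon: "monotoneT T" and C: "commutes_DR T"
begin

lemma C1: "right_cont_distortion d1 \<Longrightarrow> \<exists>d2. right_cont_distortion d2 \<and> (\<forall>F\<in>cdfM. Td d1 (T F) = T (Td d2 F))"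
  using C unfolding commutes_DR_def by blast

lemma C2: "right_cont_distortion d1 \<Longrightarrow> \<exists>d2. right_cont_distortion d2 \<and> (\<forall>F\<in>cdfM. T (Td d1 F) = Td d2 (T F))"
  using C unfolding commutes_DR_def by blast

definition u :: "real \<Rightarrow> real" where "u x = Qf (T (delta x)) 1"

lemma Td_delta: "right_cont_distortion e \<Longrightarrow> Td e (delta x) = delta x"
  using Td_eq[OF _ delta_cdfM] rcd_D(2,3) unfolding delta_def by (auto simp: fun_eq_iff)

lemma T_delta: "T (delta x) = delta (u x)"
proof -
  obtain e where e: "right_cont_distortion e" "\<forall>F\<in>cdfM. Td (stepf 1) (T F) = T (Td e F)"
    using C1[OF stepf_rcd[of 1]] by auto
  have "T (delta x) = T (Td e (delta x))" using Td_delta[OF e(1)] by simp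
  also have "\<dots> = Td (stepf 1) (T (delta x))" using e(2) delta_cdfM by simp
  also have "\<dots> = delta (u x)" unfolding u_def by (rule Td_step[OF TM[OF delta_cdfM]]) auto
  finally show ?thesis .
qed

lemma u_mono: "mono u"
proof (rule monoI)
  fix x y :: real assume "x \<le> y"
  then have "st_le (T (delta x)) (T (delta y))"
    using mon st_le_delta delta_cdfM unfolding monotoneT_def by blast
  then have "delta (u y) (u y) \<le> delta (u x) (u y)" unfolding T_delta st_le_def by blast
  then show "u x \<le> u y" unfolding delta_def by (auto split: if_splits)
qed

lemma const_case:
  assumes const: "\<And>x. u x = u 0"
  shows "\<exists>u d. mono u \<and> (\<forall>x. continuous (at_left x) u) \<and>
       distortion d \<and> strict_mono_on {0..1} d \<and> continuous_on {0..1} d \<and>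
       (\<forall>F\<in>cdfM. T F = Td d (Tu u F))"
proof -
  define c where "c = u 0"
  have hid: "homeo01 (\<lambda>x. x)" unfolding homeo01_def by (auto intro: strict_mono_onI continuous_intros)
  have TF: "T F = delta c" if F: "F \<in> cdfM" for F
  proof
    fix z
    obtain a b where ab: "\<forall>x<a. F x = 0" "\<forall>x\<ge>b. F x = 1" using cdfM_D(3)[OF F] by blast
    have "st_le (delta a) F" unfolding st_le_def delta_def using ab cdfM_range[OF F] by (auto simp: not_le)
    then have "st_le (T (delta a)) (T F)" using mon F delta_cdfM unfolding monotoneT_def by blast
    then have 1: "T F z \<le> delta c z" unfolding T_delta st_le_def c_def using const by metis
    have "st_le F (delta b)" unfolding st_le_def delta_def using ab cdfM_range[OF F] by auto
    then have "st_le (T F) (T (delta b))" using mon F delta_cdfM unfolding monotoneT_def by blast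
    then have 2: "delta c z \<le> T F z" unfolding T_delta st_le_def c_def using const by metis
    from 1 2 show "T F z = delta c z" by simp
  qed
  have Tu: "Tu (\<lambda>_. c) F = delta c" if F: "F \<in> cdfM" for F
  proof
    fix y
    show "Tu (\<lambda>_. c) F y = delta c y"
    proof (cases "c \<le> y")
      case True then show ?thesis unfolding Tu_def delta_def using meas_UNIV[OF F] by simp
    next
      case False then show ?thesis unfolding Tu_def delta_def by simp
    qed
  qed
  have m: "mono (\<lambda>_::real. c)" by (simp add: monoI)
  have lc: "\<forall>x. continuous (at_left x) (\<lambda>_::real. c)" by simp
  have dd: "distortion (\<lambda>x. x)" unfolding distortion_def by (simp add: mono_onI)
  have sm: "strict_mono_on {0..1} (\<lambda>x::real. x)" by (simp add: strict_mono_onI)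
  have co: "continuous_on {0..1} (\<lambda>x::real. x)" by (simp add: continuous_intros)
  have all: "\<forall>F\<in>cdfM. T F = Td (\<lambda>x. x) (Tu (\<lambda>_. c) F)"
  proof
    fix F assume F: "F \<in> cdfM"
    show "T F = Td (\<lambda>x. x) (Tu (\<lambda>_. c) F)"
      unfolding Tu[OF F] TF[OF F] Td_delta[OF homeo_rcd[OF hid]] ..
  qed
  show ?thesis
    apply (rule exI[of _ "\<lambda>_. c"], rule exI[of _ "\<lambda>x. x"])
    using m lc dd sm co all by blast
qed

end


locale dirnc = dirctx +
  fixes a b :: real
  assumes ab: "a < b" "u a < u b"
begin

definition E :: "real \<Rightarrow> real \<Rightarrow> real" where
  "E t = (SOME e. right_cont_distortion e \<and> (\<forall>F\<in>cdfM. Td (stepf t) (T F) = T (Td e F)))"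
definition Fs :: "real \<Rightarrow> real \<Rightarrow> real" where
  "Fs s = (SOME f. right_cont_distortion f \<and> (\<forall>F\<in>cdfM. T (Td (stepf s) F) = Td f (T F)))"
definition tau where "tau s = thr (Fs s)"
definition sig where "sig t = thr (E t)"

lemma E_prop:
  assumes "0 < t" "t \<le> 1"
  shows "right_cont_distortion (E t)" "\<And>F. F \<in> cdfM \<Longrightarrow> Td (stepf t) (T F) = T (Td (E t) F)"
proof -
  have "right_cont_distortion (E t) \<and> (\<forall>F\<in>cdfM. Td (stepf t) (T F) = T (Td (E t) F))"
    unfolding E_def by (rule someI_ex[OF C1[OF stepf_rcd[OF assms]]])
  then show "right_cont_distortion (E t)" "\<And>F. F \<in> cdfM \<Longrightarrow> Td (stepf t) (T F) = T (Td (E t) F)"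
    by auto
qed

lemma Fs_prop:
  assumes "0 < s" "s \<le> 1"
  shows "right_cont_distortion (Fs s)" "\<And>F. F \<in> cdfM \<Longrightarrow> T (Td (stepf s) F) = Td (Fs s) (T F)"
proof -
  have "right_cont_distortion (Fs s) \<and> (\<forall>F\<in>cdfM. T (Td (stepf s) F) = Td (Fs s) (T F))"
    unfolding Fs_def by (rule someI_ex[OF C2[OF stepf_rcd[OF assms]]])
  then show "right_cont_distortion (Fs s)" "\<And>F. F \<in> cdfM \<Longrightarrow> T (Td (stepf s) F) = Td (Fs s) (T F)"
    by auto
qed

lemma tau_range: "0 < s \<Longrightarrow> s \<le> 1 \<Longrightarrow> 0 < tau s \<and> tau s \<le> 1"
  unfolding tau_def using thr_prop(1,2)[OF Fs_prop(1)] by auto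

lemma sig_range: "0 < t \<Longrightarrow> t \<le> 1 \<Longrightarrow> 0 < sig t \<and> sig t \<le> 1"
  unfolding sig_def using thr_prop(1,2)[OF E_prop(1)] by auto

lemma star:
  assumes s: "0 < s" "s \<le> 1" and F: "F \<in> cdfM"
  shows "tau s \<le> T F y \<longleftrightarrow> u (Qf F s) \<le> y"
proof -
  have "T (Td (stepf s) F) = Td (Fs s) (T F)" by (rule Fs_prop(2)[OF s F])
  then have "delta (u (Qf F s)) = (\<lambda>y. Fs s (T F y))"
    unfolding Td_step[OF F s] T_delta Td_eq[OF Fs_prop(1)[OF s] TM[OF F]] .
  then have eq: "Fs s (T F y) = delta (u (Qf F s)) y" by (metis)
  have "Fs s (T F y) = 1 \<longleftrightarrow> tau s \<le> T F y"
    unfolding tau_def using thr_prop(3)[OF Fs_prop(1)[OF s]] cdfM_range[OF TM[OF F]] by blast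
  then show ?thesis using eq delta_val by simp
qed

lemma Qtwo: "0 \<le> r \<Longrightarrow> r \<le> 1 \<Longrightarrow> 0 < s \<Longrightarrow> s \<le> 1 \<Longrightarrow> Qf (twop a b r) s = (if s \<le> r then a else b)"
  using Q_twop[OF ab(1)] by blast

lemma twoM: "0 \<le> r \<Longrightarrow> r \<le> 1 \<Longrightarrow> twop a b r \<in> cdfM"
  using twop_cdfM[OF ab(1)] by blast

lemma delta_tau: assumes "0 < s" "s \<le> 1" shows "tau s \<le> delta q y \<longleftrightarrow> q \<le> y"
  using tau_range[OF assms] unfolding delta_def by auto

lemma notpoint:
  assumes r: "0 < r" "r < 1"
  shows "T (twop a b r) \<noteq> delta q"
proof
  assume eq: "T (twop a b r) = delta q"
  have "q = u (Qf (twop a b r) s)" if s: "0 < s" "s \<le> 1" for s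
  proof (rule le_iff_eq)
    fix y
    have "tau s \<le> T (twop a b r) y \<longleftrightarrow> u (Qf (twop a b r) s) \<le> y"
      by (rule star[OF s twoM]) (use r in auto)
    then show "q \<le> y \<longleftrightarrow> u (Qf (twop a b r) s) \<le> y" unfolding eq delta_tau[OF s] .
  qed
  from this[of r] this[of 1] show False
    using Qtwo[of r r] Qtwo[of r 1] r ab(2) by simp
qed

lemma E01:
  assumes t: "0 < t" "t \<le> 1" and r: "0 \<le> r" "r \<le> 1"
  shows "E t r = 0 \<or> E t r = 1"
proof (rule ccontr)
  assume ne: "\<not> (E t r = 0 \<or> E t r = 1)"
  have e: "right_cont_distortion (E t)" by (rule E_prop(1)[OF t])
  define \<rho> where "\<rho> = E t r"
  have \<rho>: "0 < \<rho>" "\<rho> < 1" using ne rcd_range[OF e r] unfolding \<rho>_def by auto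
  have r': "0 < r" "r < 1" using ne r rcd_D(2,3)[OF e] by (auto simp: less_le)
  have comp: "(\<lambda>z. E t (twop a b r z)) = twop a b \<rho>"
    unfolding twop_def \<rho>_def using rcd_D(2,3)[OF e] by (auto simp: fun_eq_iff)
  have "T (twop a b \<rho>) = T (Td (E t) (twop a b r))"
    unfolding Td_eq[OF e twoM[OF r]] comp ..
  also have "\<dots> = Td (stepf t) (T (twop a b r))" using E_prop(2)[OF t twoM[OF r]] by simp
  also have "\<dots> = delta (Qf (T (twop a b r)) t)" by (rule Td_step[OF TM[OF twoM[OF r]] t])
  finally show False using notpoint[OF \<rho>] by blast
qed

lemma E_step:
  assumes t: "0 < t" "t \<le> 1" and r: "0 \<le> r" "r \<le> 1"
  shows "E t r = stepf (sig t) r"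
  using E01[OF t r] thr_prop(3)[OF E_prop(1)[OF t] r] unfolding stepf_def sig_def by auto

lemma starstar:
  assumes t: "0 < t" "t \<le> 1" and F: "F \<in> cdfM"
  shows "t \<le> T F y \<longleftrightarrow> u (Qf F (sig t)) \<le> y"
proof -
  have st: "0 < sig t" "sig t \<le> 1" using sig_range[OF t] by auto
  have "Td (E t) F = (\<lambda>z. E t (F z))" by (rule Td_eq[OF E_prop(1)[OF t] F])
  also have "\<dots> = (\<lambda>z. stepf (sig t) (F z))" using E_step[OF t] cdfM_range[OF F] by simp
  also have "\<dots> = delta (Qf F (sig t))" by (rule delta_eq_Q[OF F st])
  finally have 1: "Td (E t) F = delta (Qf F (sig t))" .
  have "delta (Qf (T F) t) = delta (u (Qf F (sig t)))"
    using E_prop(2)[OF t F] unfolding 1 T_delta Td_step[OF TM[OF F] t] .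
  then have "Qf (T F) t = u (Qf F (sig t))" by (rule delta_inj)
  then show ?thesis using Q_iff[OF TM[OF F] t] by simp
qed

lemma sig_tau: assumes s: "0 < s" "s \<le> 1" shows "sig (tau s) = s"
proof (rule ccontr)
  assume ne: "sig (tau s) \<noteq> s"
  define s' where "s' = sig (tau s)"
  have ts: "0 < tau s" "tau s \<le> 1" using tau_range[OF s] by auto
  have s': "0 < s'" "s' \<le> 1" using sig_range[OF ts] unfolding s'_def by auto
  have equ: "u (Qf F s) = u (Qf F s')" if F: "F \<in> cdfM" for F
  proof (rule le_iff_eq)
    fix y show "u (Qf F s) \<le> y \<longleftrightarrow> u (Qf F s') \<le> y"
      using star[OF s F, of y] starstar[OF ts F, of y] unfolding s'_def by simp
  qed
  consider "s < s'" | "s' < s" using ne unfolding s'_def by linarith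
  then show False
  proof cases
    case 1
    have "u (Qf (twop a b s) s) = u (Qf (twop a b s) s')" using equ twoM s by simp
    then show False using Qtwo[of s s] Qtwo[of s s'] s s' 1 ab(2) by simp
  next
    case 2
    have "u (Qf (twop a b s') s) = u (Qf (twop a b s') s')" using equ twoM s' by simp
    then show False using Qtwo[of s' s] Qtwo[of s' s'] s s' 2 ab(2) by simp
  qed
qed

lemma sig_mono_lt:
  assumes t: "0 < t" "t < t'" "t' \<le> 1"
  shows "sig t \<le> sig t'"
proof (rule ccontr)
  assume "\<not> sig t \<le> sig t'"
  then have lt: "sig t' < sig t" by simp
  have t1: "0 < t" "t \<le> 1" and t2: "0 < t'" "t' \<le> 1" using t by auto
  define r where "r = sig t'"
  have r: "0 \<le> r" "r \<le> 1" using sig_range[OF t2] unfolding r_def by auto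
  have st: "sig t \<le> 1" using sig_range[OF t1] by simp
  have F: "twop a b r \<in> cdfM" by (rule twoM[OF r])
  have "t' \<le> T (twop a b r) (u a)"
    using starstar[OF t2 F, of "u a"] Qtwo[OF r, of "sig t'"] sig_range[OF t2] unfolding r_def by simp
  then have "t \<le> T (twop a b r) (u a)" using t by simp
  then have "u (Qf (twop a b r) (sig t)) \<le> u a" using starstar[OF t1 F] by simp
  moreover have "Qf (twop a b r) (sig t) = b"
    using Qtwo[OF r, of "sig t"] sig_range[OF t1] lt unfolding r_def by simp
  ultimately show False using ab(2) by simp
qed

lemma sig_le: "0 < t \<Longrightarrow> t \<le> t' \<Longrightarrow> t' \<le> 1 \<Longrightarrow> sig t \<le> sig t'"
  using sig_mono_lt by (cases "t = t'") auto

lemma tau_strict: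
  assumes s: "0 < s" "s < s'" "s' \<le> 1"
  shows "tau s < tau s'"
proof (rule ccontr)
  assume "\<not> tau s < tau s'"
  then have le: "tau s' \<le> tau s" by simp
  have s1: "0 < s" "s \<le> 1" and s2: "0 < s'" "s' \<le> 1" using s by auto
  have "sig (tau s') \<le> sig (tau s)"
    using tau_range[OF s1] tau_range[OF s2] le by (intro sig_le) auto
  then show False using sig_tau[OF s1] sig_tau[OF s2] s by simp
qed

lemma tau_le: "0 < s \<Longrightarrow> s \<le> s' \<Longrightarrow> s' \<le> 1 \<Longrightarrow> tau s \<le> tau s'"
  using tau_strict by (cases "s = s'") (auto intro: less_imp_le)

lemma sig_neq:
  assumes t: "0 < t" "t < t'" "t' \<le> 1"
  shows "sig t \<noteq> sig t'"
proof
  assume eq: "sig t = sig t'"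
  have t1: "0 < t" "t \<le> 1" and t2: "0 < t'" "t' \<le> 1" using t by auto
  have equiv: "t \<le> T F y \<longleftrightarrow> t' \<le> T F y" if F: "F \<in> cdfM" for F y
    using starstar[OF t1 F, of y] starstar[OF t2 F, of y] eq by simp
  define c where "c = tau (1/2)"
  define c1 where "c1 = tau 1"
  have c: "0 < c" "c < c1" "c1 \<le> 1"
    using tau_range[of "1/2"] tau_strict[of "1/2" 1] tau_range[of 1] unfolding c_def c1_def by auto
  define d1 where "d1 = (\<lambda>w::real. if c1 \<le> w then 1 else if c \<le> w then t else 0)"
  have rd1: "right_cont_distortion d1"
    unfolding right_cont_distortion_def distortion_def
  proof (intro conjI ballI)
    show "mono_on {0..1} d1" unfolding d1_def by (rule mono_onI) (use c t in auto)
    show "d1 0 = 0" "d1 1 = 1" unfolding d1_def using c by auto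
    fix x :: real assume "x \<in> {0..<1}"
    have "eventually (\<lambda>z. d1 z = d1 x) (at_right x)"
      unfolding eventually_at_right_field
    proof (cases "x < c")
      case True then show "\<exists>b>x. \<forall>y>x. y < b \<longrightarrow> d1 y = d1 x"
        unfolding d1_def using c by (intro exI[of _ c]) auto
    next
      case False note nc = this
      show "\<exists>b>x. \<forall>y>x. y < b \<longrightarrow> d1 y = d1 x"
      proof (cases "x < c1")
        case True then show ?thesis unfolding d1_def using c nc by (intro exI[of _ c1]) auto
      next
        case False then show ?thesis unfolding d1_def using c nc by (intro exI[of _ "x+1"]) auto
      qed
    qed
    then show "(d1 \<longlongrightarrow> d1 x) (at_right x)" by (rule tendsto_eventually)
  qed
  obtain e where e: "right_cont_distortion e" "\<forall>F\<in>cdfM. Td d1 (T F) = T (Td e F)"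
    using C1[OF rd1] by blast
  define F0 where "F0 = twop a b (1/2)"
  have F0: "F0 \<in> cdfM" unfolding F0_def by (rule twoM) auto
  have G: "Td e F0 \<in> cdfM" unfolding Td_eq[OF e(1) F0] by (rule comp_cdfM[OF e(1) F0])
  have TG: "T (Td e F0) = (\<lambda>y. d1 (T F0 y))"
    using e(2) F0 Td_eq[OF rd1 TM[OF F0]] by simp
  have h1: "c \<le> T F0 (u a)"
    using star[of "1/2" F0 "u a"] F0 Qtwo[of "1/2" "1/2"] unfolding c_def F0_def by simp
  have h2: "\<not> c1 \<le> T F0 (u a)"
    using star[of 1 F0 "u a"] F0 Qtwo[of "1/2" 1] ab(2) unfolding c1_def F0_def by simp
  have "T (Td e F0) (u a) = t" unfolding TG d1_def using h1 h2 by simp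
  then show False using equiv[OF G, of "u a"] t by simp
qed

lemma sig_strict: "0 < t \<Longrightarrow> t < t' \<Longrightarrow> t' \<le> 1 \<Longrightarrow> sig t < sig t'"
  using sig_mono_lt sig_neq by (simp add: order.not_eq_order_implies_strict)

lemma sig1: "sig 1 = 1"
proof -
  have "sig (tau 1) = 1" using sig_tau[of 1] by simp
  moreover have "sig (tau 1) \<le> sig 1" using tau_range[of 1] by (intro sig_le) auto
  moreover have "sig 1 \<le> 1" using sig_range[of 1] by simp
  ultimately show ?thesis by simp
qed

lemma tau_sig: assumes t: "0 < t" "t \<le> 1" shows "tau (sig t) = t"
proof (rule ccontr)
  assume ne: "tau (sig t) \<noteq> t"
  have st: "0 < sig t" "sig t \<le> 1" using sig_range[OF t] by auto
  have ts: "0 < tau (sig t)" "tau (sig t) \<le> 1" using tau_range[OF st] by auto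
  have eq: "sig (tau (sig t)) = sig t" by (rule sig_tau[OF st])
  consider "tau (sig t) < t" | "t < tau (sig t)" using ne by linarith
  then show False
  proof cases
    case 1 then show False using sig_strict[OF ts(1) 1 t(2)] eq by simp
  next
    case 2 then show False using sig_strict[OF t(1) 2 ts(2)] eq by simp
  qed
qed

lemma tau1: "tau 1 = 1" using tau_sig[of 1] sig1 by simp

end


lemma mono_surj_cont:
  fixes f :: "real \<Rightarrow> real"
  assumes mono: "\<And>x y. 0 \<le> x \<Longrightarrow> x \<le> y \<Longrightarrow> y \<le> 1 \<Longrightarrow> f x \<le> f y"
    and rng: "\<And>x. 0 \<le> x \<Longrightarrow> x \<le> 1 \<Longrightarrow> 0 \<le> f x \<and> f x \<le> 1"
    and surj: "\<And>v. 0 \<le> v \<Longrightarrow> v \<le> 1 \<Longrightarrow> \<exists>x. 0 \<le> x \<and> x \<le> 1 \<and> f x = v"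
  shows "continuous_on {0..1} f"
  unfolding continuous_on_iff
proof (intro ballI allI impI)
  fix x e :: real assume x: "x \<in> {0..1}" and e: "0 < e"
  define lo where "lo = max 0 (f x - e/2)"
  define hi where "hi = min 1 (f x + e/2)"
  have fx: "0 \<le> f x" "f x \<le> 1" using rng x by auto
  obtain ylo where ylo: "0 \<le> ylo" "ylo \<le> 1" "f ylo = lo" using surj[of lo] fx e unfolding lo_def by auto
  obtain yhi where yhi: "0 \<le> yhi" "yhi \<le> 1" "f yhi = hi" using surj[of hi] fx e unfolding hi_def by auto
  define \<delta> where "\<delta> = min (if ylo < x then x - ylo else 1) (if x < yhi then yhi - x else 1)"
  have \<delta>: "0 < \<delta>" unfolding \<delta>_def by auto
  show "\<exists>d>0. \<forall>x'\<in>{0..1}. dist x' x < d \<longrightarrow> dist (f x') (f x) < e"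
  proof (intro exI[of _ \<delta>] conjI ballI impI \<delta>)
    fix x' assume x': "x' \<in> {0..1}" and dx: "dist x' x < \<delta>"
    have fx': "0 \<le> f x'" "f x' \<le> 1" using rng x' by auto
    have L: "lo \<le> f x'"
    proof (cases "x \<le> x'")
      case True then have "f x \<le> f x'" using mono x x' by auto
      then show ?thesis unfolding lo_def using fx' e by simp
    next
      case False
      show ?thesis
      proof (cases "ylo < x")
        case True
        then have "ylo \<le> x'" using dx False unfolding \<delta>_def dist_real_def by auto
        then show ?thesis using mono ylo x' by auto
      next
        case False
        then have "f x \<le> f ylo" using mono x ylo by auto
        then have "f x \<le> lo" using ylo(3) by simp
        then have "lo = 0" unfolding lo_def using e by (auto simp: max_def split: if_splits)
        then show ?thesis using fx' by simp
      qed
    qed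
    have H: "f x' \<le> hi"
    proof (cases "x' \<le> x")
      case True then have "f x' \<le> f x" using mono x x' by auto
      then show ?thesis unfolding hi_def using fx' e by simp
    next
      case False
      show ?thesis
      proof (cases "x < yhi")
        case True
        then have "x' \<le> yhi" using dx False unfolding \<delta>_def dist_real_def by auto
        then show ?thesis using mono yhi x' by auto
      next
        case False
        then have "f yhi \<le> f x" using mono x yhi by auto
        then have "hi \<le> f x" using yhi(3) by simp
        then have "hi = 1" unfolding hi_def using e by (auto simp: min_def split: if_splits)
        then show ?thesis using fx' by simp
      qed
    qed
    have "lo \<ge> f x - e/2" "hi \<le> f x + e/2" unfolding lo_def hi_def by auto
    then show "dist (f x') (f x) < e" using L H e unfolding dist_real_def by auto
  qed
qed

context dirnc
begin

lemma u_lc: "continuous (at_left x) u"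
  unfolding continuous_within
proof (rule order_tendstoI)
  fix a' assume a': "a' < u x"
  have "\<exists>z0<x. a' < u z0"
  proof (rule ccontr)
    assume nex: "\<not> (\<exists>z0<x. a' < u z0)"
    have below: "u z \<le> a'" if "z < x" for z
    proof (rule ccontr)
      assume "\<not> u z \<le> a'" then have "a' < u z" by simp
      with that nex show False by blast
    qed
    define F where "F = unif x"
    have F: "F \<in> cdfM" unfolding F_def by (rule unif_cdfM)
    have lt: "t \<le> T F a'" if t: "0 < t" "t < 1" for t
    proof -
      have "sig t < 1" using sig_strict[of t 1] t sig1 by simp
      moreover have "0 < sig t" using sig_range[of t] t by simp
      ultimately have "Qf F (sig t) < x" unfolding F_def using Q_unif[of "sig t" x] by simp
      then have "u (Qf F (sig t)) \<le> a'" by (rule below)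
      then show ?thesis using starstar[of t F a'] t F by simp
    qed
    have "1 \<le> T F a'"
    proof (rule ccontr)
      assume "\<not> 1 \<le> T F a'"
      moreover have "0 \<le> T F a'" using cdfM_range[OF TM[OF F]] by simp
      ultimately show False using lt[of "(T F a' + 1)/2"] by simp
    qed
    then have "u (Qf F (sig 1)) \<le> a'" using starstar[of 1 F a'] F by simp
    then have "u x \<le> a'" using sig1 Q_unif[of 1 x] unfolding F_def by simp
    then show False using a' by simp
  qed
  then obtain z0 where z0: "z0 < x" "a' < u z0" by blast
  show "eventually (\<lambda>y. a' < u y) (at_left x)"
    unfolding eventually_at_left_field
  proof (intro exI[of _ z0] conjI allI impI z0(1))
    fix y assume "z0 < y" "y < x"
    then show "a' < u y" using z0 monoD[OF u_mono, of z0 y] by simp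
  qed
next
  fix a' assume a': "u x < a'"
  show "eventually (\<lambda>y. u y < a') (at_left x)"
    unfolding eventually_at_left_field
  proof (intro exI[of _ "x - 1"] conjI allI impI)
    fix y assume "x - 1 < y" "y < x"
    then show "u y < a'" using a' monoD[OF u_mono, of y x] by simp
  qed simp
qed

definition dd :: "real \<Rightarrow> real" where "dd v = (if v \<le> 0 then 0 else tau v)"

lemma dd_strict: assumes "0 \<le> v" "v < w" "w \<le> 1" shows "dd v < dd w"
proof (cases "v \<le> 0")
  case True then show ?thesis unfolding dd_def using assms tau_range[of w] by auto
next
  case False then show ?thesis unfolding dd_def using assms tau_strict[of v w] by auto
qed

lemma dd_range: assumes "0 \<le> v" "v \<le> 1" shows "0 \<le> dd v \<and> dd v \<le> 1"
  unfolding dd_def using tau_range[of v] assms by auto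

lemma homeo_dd: "homeo01 dd"
  unfolding homeo01_def
proof (intro conjI)
  show sm: "strict_mono_on {0..1} dd" by (rule strict_mono_onI) (use dd_strict in auto)
  show "continuous_on {0..1} dd"
  proof (rule mono_surj_cont)
    fix x y :: real assume "0 \<le> x" "x \<le> y" "y \<le> 1"
    then show "dd x \<le> dd y" using dd_strict[of x y] by (cases "x = y") auto
  next
    fix x :: real assume "0 \<le> x" "x \<le> 1" then show "0 \<le> dd x \<and> dd x \<le> 1" by (rule dd_range)
  next
    fix v :: real assume v: "0 \<le> v" "v \<le> 1"
    show "\<exists>x. 0 \<le> x \<and> x \<le> 1 \<and> dd x = v"
    proof (cases "v = 0")
      case True then show ?thesis by (intro exI[of _ 0]) (simp add: dd_def)
    next
      case False
      then have "0 < v" using v by simp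
      then show ?thesis using sig_range[of v] tau_sig[of v] v
        by (intro exI[of _ "sig v"]) (simp add: dd_def)
    qed
  qed
  show "dd 0 = 0" unfolding dd_def by simp
  show "dd 1 = 1" unfolding dd_def using tau1 by simp
qed

lemma sig_le_iff:
  assumes t: "0 < t" "t \<le> 1" and v: "0 \<le> v" "v \<le> 1"
  shows "sig t \<le> v \<longleftrightarrow> t \<le> dd v"
proof (cases "v \<le> 0")
  case True then show ?thesis using sig_range[OF t] t unfolding dd_def by auto
next
  case False
  then have v0: "0 < v" by simp
  show ?thesis
  proof
    assume "sig t \<le> v"
    then have "tau (sig t) \<le> tau v" using sig_range[OF t] v by (intro tau_le) auto
    then show "t \<le> dd v" using tau_sig[OF t] v0 unfolding dd_def by simp
  next
    assume "t \<le> dd v"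
    then have "t \<le> tau v" using v0 unfolding dd_def by simp
    then have "sig t \<le> sig (tau v)" using tau_range[OF v0 v(2)] t by (intro sig_le) auto
    then show "sig t \<le> v" using sig_tau[OF v0 v(2)] by simp
  qed
qed

lemma u_lc': "\<forall>x. continuous (at_left x) u" using u_lc by blast

lemma pointwise:
  assumes F: "F \<in> cdfM"
  shows "T F y = dd (Tu u F y)"
proof -
  define S where "S = {x. u x \<le> y}"
  have TFr: "0 \<le> T F y" "T F y \<le> 1" using cdfM_range[OF TM[OF F]] by auto
  have Tu: "Tu u F y = (if S = {} then 0 else if S = UNIV then 1 else F (Sup S))"
    unfolding S_def by (rule Tu_formula[OF F u_mono u_lc'])
  have "S = {} \<or> S = UNIV \<or> S = {..Sup S}" unfolding S_def by (rule Sy_struct[OF u_mono u_lc'])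
  then consider "S = {}" | "S \<noteq> {}" "S = UNIV" | "S \<noteq> {}" "S \<noteq> UNIV" "S = {..Sup S}" by blast
  then show ?thesis
  proof cases
    case 1
    have "T F y = 0"
    proof (rule ccontr)
      assume "T F y \<noteq> 0"
      then have pos: "0 < T F y" using TFr by simp
      have "u (Qf F (sig (T F y))) \<le> y" using starstar[OF pos TFr(2) F, of y] by simp
      then show False using 1 unfolding S_def by blast
    qed
    then show ?thesis using Tu 1 unfolding dd_def by simp
  next
    case 2
    have "u (Qf F (sig 1)) \<le> y" using 2 unfolding S_def by blast
    then have "1 \<le> T F y" using starstar[of 1 F y] F by simp
    then have "T F y = 1" using TFr by simp
    then show ?thesis using Tu 2 homeo_dd unfolding homeo01_def by simp
  next
    case 3
    define c where "c = Sup S"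
    have Tuc: "Tu u F y = F c" using Tu 3 unfolding c_def by simp
    have Fc: "0 \<le> F c" "F c \<le> 1" using cdfM_range[OF F] by auto
    have "T F y = dd (F c)"
    proof (rule eq01[OF TFr])
      show "0 \<le> dd (F c)" "dd (F c) \<le> 1" using dd_range[OF Fc] by auto
      fix t :: real assume t: "0 < t" "t \<le> 1"
      have st: "0 < sig t" "sig t \<le> 1" using sig_range[OF t] by auto
      have "t \<le> T F y \<longleftrightarrow> u (Qf F (sig t)) \<le> y" by (rule starstar[OF t F])
      also have "\<dots> \<longleftrightarrow> Qf F (sig t) \<in> S" unfolding S_def by simp
      also have "\<dots> \<longleftrightarrow> Qf F (sig t) \<le> c" using 3 unfolding c_def by (metis atMost_iff)
      also have "\<dots> \<longleftrightarrow> sig t \<le> F c" using Q_iff[OF F st] by simp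
      also have "\<dots> \<longleftrightarrow> t \<le> dd (F c)" by (rule sig_le_iff[OF t Fc])
      finally show "t \<le> T F y \<longleftrightarrow> t \<le> dd (F c)" .
    qed
    then show ?thesis using Tuc by simp
  qed
qed

lemma main:
  "\<exists>u d. mono u \<and> (\<forall>x. continuous (at_left x) u) \<and>
       distortion d \<and> strict_mono_on {0..1} d \<and> continuous_on {0..1} d \<and>
       (\<forall>F\<in>cdfM. T F = Td d (Tu u F))"
proof -
  have h: "homeo01 dd" by (rule homeo_dd)
  have dist: "distortion dd" unfolding distortion_def
    using h homeo_mono[OF h] unfolding homeo01_def by (auto intro: mono_onI)
  have all: "\<forall>F\<in>cdfM. T F = Td dd (Tu u F)"
  proof
    fix F assume F: "F \<in> cdfM"
    show "T F = Td dd (Tu u F)"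
      unfolding Td_eq[OF homeo_rcd[OF h] Tu_cdfM[OF F u_mono u_lc']]
      using pointwise[OF F] by (simp add: fun_eq_iff)
  qed
  show ?thesis
    apply (rule exI[of _ u], rule exI[of _ dd])
    using u_mono u_lc' dist h all unfolding homeo01_def by blast
qed

end



theorem theorem4:
  fixes T :: "(real \<Rightarrow> real) \<Rightarrow> (real \<Rightarrow> real)"
  assumes "\<forall>F\<in>cdfM. T F \<in> cdfM"
    and "monotoneT T"
  shows "commutes_DR T \<longleftrightarrow>
    (\<exists>u d. mono u \<and> (\<forall>x. continuous (at_left x) u) \<and>
       distortion d \<and> strict_mono_on {0..1} d \<and> continuous_on {0..1} d \<and>
       (\<forall>F\<in>cdfM. T F = Td d (Tu u F)))"
proof
  assume C: "commutes_DR T"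
  have dc: "dirctx T" unfolding dirctx_def using assms C by blast
  interpret dirctx T by (rule dc)
  show "\<exists>u d. mono u \<and> (\<forall>x. continuous (at_left x) u) \<and>
       distortion d \<and> strict_mono_on {0..1} d \<and> continuous_on {0..1} d \<and>
       (\<forall>F\<in>cdfM. T F = Td d (Tu u F))"
  proof (cases "\<forall>x. u x = u 0")
    case True then show ?thesis using const_case by blast
  next
    case False
    then obtain x where ux: "u x \<noteq> u 0" by blast
    define a where "a = min x 0"
    define b where "b = max x 0"
    have "x \<noteq> 0" using ux by auto
    then have ab: "a < b" unfolding a_def b_def by auto
    have "u a \<le> u b" using ab by (intro monoD[OF u_mono]) simp
    moreover have "u a \<noteq> u b" using ux unfolding a_def b_def by (auto simp: min_def max_def)
    ultimately have uab: "u a < u b" by simp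
    have "dirnc T a b" unfolding dirnc_def dirnc_axioms_def using dc ab uab by blast
    then interpret dirnc T a b .
    show ?thesis by (rule main)
  qed
next
  assume "\<exists>u d. mono u \<and> (\<forall>x. continuous (at_left x) u) \<and>
       distortion d \<and> strict_mono_on {0..1} d \<and> continuous_on {0..1} d \<and>
       (\<forall>F\<in>cdfM. T F = Td d (Tu u F))"
  then obtain u d where h: "mono u" "\<forall>x. continuous (at_left x) u" "distortion d"
    "strict_mono_on {0..1} d" "continuous_on {0..1} d" "\<forall>F\<in>cdfM. T F = Td d (Tu u F)" by blast
  show "commutes_DR T" by (rule dir2[OF h])
qed

end
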